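(* Let $A,B$ be integers with $A>4$ and $B>2A$, let $n\ge 1$, and let $(a_i,b_i)$, $i=0,1,\dots,n+1$, be integers with $a_0=b_0=A$, such that $s_i:=a_{i+1}-a_i\ge 0$ and $t_i:=b_{i+1}-b_i\ge 0$ for $i=0,\dots,n$, and such that $\min(a_1,b_1)\in[A,A+3]$, $a_n+b_n\le B$ and $a_{n+1}+b_{n+1}>B$. Then for any $q>0$ and any positive, smooth, convex, decreasing function $g:(0,\infty)\to(0,\infty)$, $$ \sum_{i=0}^n\big[s_i\,g(b_iq)+t_i\,g(a_iq)\big]\ge \frac 2q\int_{Aq}^{Bq}g\;-\;2B\,g(Bq/2). $$ *)

theory Defs
  imports "HOL-Analysis.Analysis"
begin

definition smooth_on :: "real set \<Rightarrow> (real \<Rightarrow> real) \<Rightarrow> bool" where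
  "smooth_on S f \<longleftrightarrow> (\<forall>k. \<forall>x\<in>S. ((deriv ^^ k) f) differentiable (at x))"

end

theory Submission imports Defs begin

locale L =
  fixes g :: "real \<Rightarrow> real" and c :: real
  assumes pos: "\<And>x. x > 0 \<Longrightarrow> g x > 0"
    and cvx: "convex_on {0<..} g"
    and anti: "antimono_on {0<..} g"
    and dif: "\<And>x. x > 0 \<Longrightarrow> g differentiable (at x)"
    and cpos: "c > 0"
begin

definition H where "H u = integral {c..u} g"
definition Phi where "Phi x y = 2 * H (min x y) + \<bar>x - y\<bar> * g (min x y)"

lemma cont: "continuous_on {0<..} g"
  by (rule convex_on_continuous[OF _ cvx]) auto

lemma cont_sub: "0 < a \<Longrightarrow> continuous_on {a..b} g"
  by (rule continuous_on_subset[OF cont]) auto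

lemma integ: "0 < a \<Longrightarrow> g integrable_on {a..b}"
  by (rule integrable_continuous_real[OF cont_sub])

lemma dec: "0 < x \<Longrightarrow> x \<le> y \<Longrightarrow> g y \<le> g x"
  using anti by (auto simp: monotone_on_def)

lemma H_deriv: assumes "c < u" shows "(H has_real_derivative g u) (at u)"
proof -
  have "((\<lambda>x. integral {c..x} g) has_real_derivative g u) (at u within {c..u+1})"
    by (rule integral_has_real_derivative[OF cont_sub]) (use assms cpos in auto)
  moreover have "u \<in> interior {c..u+1}" using assms by auto
  ultimately show ?thesis unfolding H_def
    using at_within_interior by metis
qed

lemma g_deriv: "0 < u \<Longrightarrow> (g has_real_derivative deriv g u) (at u)"
  using dif DERIV_deriv_iff_real_differentiable by blast

lemma tangent: assumes "0 < u" "0 < y" shows "g y - g u \<ge> deriv g u * (y - u)"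
  apply (rule convex_on_imp_above_tangent[OF cvx])
  using assms g_deriv[of u] by (auto intro: has_field_derivative_at_within simp: convex_connected interior_open)

lemma step_lo: assumes "c < x" "x \<le> x'" "x' \<le> y"
  shows "Phi x' y - Phi x y \<le> (x' - x) * g y"
proof -
  define F where "F u = u * g y - 2 * H u - (y - u) * g u" for u
  have "F x \<le> F x'"
  proof (rule DERIV_nonneg_imp_nondecreasing[OF assms(2)])
    fix u assume u: "x \<le> u" "u \<le> x'"
    have "(F has_real_derivative (g y - 2 * g u - ((-1) * g u + (y - u) * deriv g u))) (at u)"
      unfolding F_def
      using u assms cpos
      by (auto intro!: derivative_eq_intros H_deriv g_deriv)
    moreover have "g y - 2 * g u - ((-1) * g u + (y - u) * deriv g u) \<ge> 0"
      using tangent[of u y] u assms cpos by (simp add: algebra_simps)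
    ultimately show "\<exists>d. (F has_real_derivative d) (at u) \<and> d \<ge> 0" by blast
  qed
  then show ?thesis using assms unfolding F_def Phi_def by (simp add: algebra_simps)
qed

lemma step_hi: assumes "y \<le> x" "x \<le> x'"
  shows "Phi x' y - Phi x y \<le> (x' - x) * g y"
  using assms unfolding Phi_def by (simp add: algebra_simps)

lemma step_h: assumes "c < x" "x \<le> x'" "c < y"
  shows "Phi x' y - Phi x y \<le> (x' - x) * g y"
proof (cases "x' \<le> y")
  case True then show ?thesis using step_lo assms by blast
next
  case False
  show ?thesis
  proof (cases "y \<le> x")
    case True then show ?thesis using step_hi assms by blast
  next
    case False
    have "Phi y y - Phi x y \<le> (y - x) * g y" using step_lo[of x y y] assms False by auto
    moreover have "Phi x' y - Phi y y \<le> (x' - y) * g y" using step_hi[of y y x'] \<open>\<not> x' \<le> y\<close> by auto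
    ultimately show ?thesis by (simp add: algebra_simps)
  qed
qed

lemma Phi_sym: "Phi x y = Phi y x"
  unfolding Phi_def by (simp add: min.commute abs_minus_commute)

lemma step: assumes "c < x" "x \<le> x'" "c < y" "y \<le> y'"
  shows "Phi x' y' - Phi x y \<le> (x' - x) * g y + (y' - y) * g x"
proof -
  have 1: "Phi x' y - Phi x y \<le> (x' - x) * g y" using step_h assms by blast
  have "Phi y' x' - Phi y x' \<le> (y' - y) * g x'" using step_h[of y y' x'] assms by auto
  hence 2: "Phi x' y' - Phi x' y \<le> (y' - y) * g x'" by (simp add: Phi_sym)
  have "g x' \<le> g x" using dec assms cpos by auto
  hence "(y' - y) * g x' \<le> (y' - y) * g x" using assms by (simp add: mult_left_mono)
  with 1 2 show ?thesis by linarith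
qed


lemma H_diff: assumes "c \<le> a" "a \<le> b" shows "H b - H a = integral {a..b} g"
  using Henstock_Kurzweil_Integration.integral_combine[OF assms integ[OF cpos, of b]] cpos unfolding H_def by simp

lemma int_upper: assumes "0 < a" "a \<le> b" shows "integral {a..b} g \<le> (b - a) * g a"
proof -
  have "integral {a..b} g \<le> integral {a..b} (\<lambda>_. g a)"
    by (rule integral_le[OF integ]) (use assms dec in auto)
  then show ?thesis using assms by simp
qed

lemma int_nonneg: assumes "0 < a" shows "0 \<le> integral {a..b} g"
  using assms pos by (intro integral_nonneg[OF integ]) (auto intro: less_imp_le)

lemma Phi_end: assumes "c \<le> x" "c \<le> y" "x + y \<ge> P" "P \<ge> 2 * c"
  shows "Phi x y \<ge> 2 * H P - P * g (P/2)"
proof -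
  define m where "m = P/2"
  define u where "u = min x y"
  have u: "c \<le> u" "x + y - 2*u = \<bar>x - y\<bar>" using assms unfolding u_def by auto
  have cm: "c \<le> m" using assms m_def by auto
  have Phi: "Phi x y = 2 * H u + \<bar>x - y\<bar> * g u" unfolding Phi_def u_def by simp
  have "Phi x y \<ge> 2 * H m"
  proof (cases "m \<le> u")
    case True
    have "H u - H m \<ge> 0" using H_diff[OF cm True] int_nonneg cm cpos by auto
    moreover have "\<bar>x - y\<bar> * g u \<ge> 0" using pos u cpos by (simp add: less_imp_le)
    ultimately show ?thesis using Phi by linarith
  next
    case False
    have "H m - H u \<le> (m - u) * g u" using H_diff[OF u(1)] False int_upper[of u m] u cpos by auto
    moreover have "(P - 2*u) * g u \<le> \<bar>x - y\<bar> * g u"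
      using u assms pos[of u] cpos by (intro mult_right_mono) auto
    ultimately show ?thesis using Phi unfolding m_def by (simp add: algebra_simps)
  qed
  moreover have "H P - H m \<le> (P - m) * g m" using H_diff[OF cm] int_upper[of m P] cm cpos m_def by auto
  ultimately show ?thesis using m_def by (simp add: algebra_simps)
qed

end

theorem lemma8:
  fixes A B :: int and n :: nat and a b :: "nat \<Rightarrow> int"
    and q :: real and g :: "real \<Rightarrow> real"
  assumes "A > 4" and "B > 2 * A" and "n \<ge> 1"
    and "a 0 = A" and "b 0 = A"
    and "\<And>i. i \<le> n \<Longrightarrow> a (Suc i) - a i \<ge> 0"
    and "\<And>i. i \<le> n \<Longrightarrow> b (Suc i) - b i \<ge> 0"
    and "A \<le> min (a 1) (b 1)" and "min (a 1) (b 1) \<le> A + 3"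
    and "a n + b n \<le> B" and "a (Suc n) + b (Suc n) > B"
    and "q > 0"
    and "\<And>x. x > 0 \<Longrightarrow> g x > 0"
    and "smooth_on {0<..} g"
    and "convex_on {0<..} g"
    and "antimono_on {0<..} g"
  shows "(\<Sum>i=0..n. real_of_int (a (Suc i) - a i) * g (real_of_int (b i) * q)
                  + real_of_int (b (Suc i) - b i) * g (real_of_int (a i) * q))
         \<ge> 2 / q * integral {real_of_int A * q .. real_of_int B * q} g
           - 2 * real_of_int B * g (real_of_int B * q / 2)"
proof -
  define Q where "Q = real_of_int A * q"
  define P where "P = real_of_int B * q"
  have Qpos: "Q > 0" using assms(1,12) unfolding Q_def by simp
  have dif: "\<And>x. x > 0 \<Longrightarrow> g differentiable (at x)"
    using assms(14) unfolding smooth_on_def by (metis funpow_0 greaterThan_iff)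
  interpret L g "Q/2"
    by unfold_locales (use assms(13,15,16) dif Qpos in auto)
  define x where "x i = real_of_int (a i) * q" for i
  define y where "y i = real_of_int (b i) * q" for i
  have ge: "a i \<ge> A \<and> b i \<ge> A" if "i \<le> Suc n" for i
    using that
  proof (induction i)
    case 0 then show ?case using assms(4,5) by simp
  next
    case (Suc i)
    then show ?case using assms(6,7)[of i] by force
  qed
  have xge: "x i \<ge> Q" "y i \<ge> Q" if "i \<le> Suc n" for i
    using ge[OF that] assms(12) unfolding x_def y_def Q_def by (auto intro: mult_right_mono)
  have tele: "Phi (x k) (y k) - Phi (x 0) (y 0) \<le>
      (\<Sum>i<k. (x (Suc i) - x i) * g (y i) + (y (Suc i) - y i) * g (x i))" if "k \<le> Suc n" for k
    using that
  proof (induction k)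
    case 0 then show ?case by simp
  next
    case (Suc k)
    have "Phi (x (Suc k)) (y (Suc k)) - Phi (x k) (y k)
        \<le> (x (Suc k) - x k) * g (y k) + (y (Suc k) - y k) * g (x k)"
    proof (rule step)
      show "Q/2 < x k" "Q/2 < y k" using xge[of k] Suc Qpos by auto
      show "x k \<le> x (Suc k)" "y k \<le> y (Suc k)"
        using assms(6,7)[of k] Suc assms(12) unfolding x_def y_def by auto
    qed
    then show ?case using Suc by simp
  qed
  have T: "Phi (x (Suc n)) (y (Suc n)) - Phi (x 0) (y 0) \<le>
      q * (\<Sum>i=0..n. real_of_int (a (Suc i) - a i) * g (real_of_int (b i) * q)
                  + real_of_int (b (Suc i) - b i) * g (real_of_int (a i) * q))"
  proof -
    have "(\<Sum>i<Suc n. (x (Suc i) - x i) * g (y i) + (y (Suc i) - y i) * g (x i))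
       = q * (\<Sum>i=0..n. real_of_int (a (Suc i) - a i) * g (real_of_int (b i) * q)
                  + real_of_int (b (Suc i) - b i) * g (real_of_int (a i) * q))"
      unfolding sum_distrib_left x_def y_def
      by (rule sum.cong) (auto simp: algebra_simps)
    then show ?thesis using tele[of "Suc n"] by simp
  qed
  have "Phi (x (Suc n)) (y (Suc n)) \<ge> 2 * H P - P * g (P/2)"
  proof (rule Phi_end)
    show "Q/2 \<le> x (Suc n)" "Q/2 \<le> y (Suc n)" using xge[of "Suc n"] Qpos by auto
    have "real_of_int B \<le> real_of_int (a (Suc n)) + real_of_int (b (Suc n))"
      using assms(11) by linarith
    then show "x (Suc n) + y (Suc n) \<ge> P" unfolding x_def y_def P_def
      using assms(12) by (metis distrib_right mult_right_mono less_imp_le)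
    have "real_of_int A \<le> real_of_int B" using assms(1,2) by linarith
    then have "Q \<le> P" unfolding Q_def P_def using assms(12) by (simp add: mult_right_mono)
    then show "P \<ge> 2 * (Q/2)" by simp
  qed
  moreover have "Phi (x 0) (y 0) = 2 * H Q"
  proof -
    have "x 0 = Q" "y 0 = Q" unfolding x_def y_def Q_def using assms(4,5) by simp_all
    then show ?thesis by (simp add: Phi_def)
  qed
  moreover have "H P - H Q = integral {Q..P} g"
  proof (rule H_diff)
    show "Q/2 \<le> Q" using Qpos by simp
    have "real_of_int A \<le> real_of_int B" using assms(1,2) by linarith
    then show "Q \<le> P" unfolding Q_def P_def using assms(12) by (simp add: mult_right_mono)
  qed
  ultimately have main: "q * (\<Sum>i=0..n. real_of_int (a (Suc i) - a i) * g (real_of_int (b i) * q)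
                  + real_of_int (b (Suc i) - b i) * g (real_of_int (a i) * q))
      \<ge> 2 * integral {Q..P} g - P * g (P/2)" using T by linarith
  have gP: "g (P/2) > 0" using assms(1,2,12,13) unfolding P_def by simp
  have Bpos: "real_of_int B > 0" using assms(1,2) by linarith
  have "2 / q * integral {Q..P} g - real_of_int B * g (P/2)
      = (2 * integral {Q..P} g - P * g (P/2)) / q"
    using assms(12) unfolding P_def by (simp add: field_simps)
  also have "\<dots> \<le> (\<Sum>i=0..n. real_of_int (a (Suc i) - a i) * g (real_of_int (b i) * q)
                  + real_of_int (b (Suc i) - b i) * g (real_of_int (a i) * q))"
    using main assms(12) by (simp add: divide_le_eq mult.commute)
  finally have fin: "2 / q * integral {Q..P} g - real_of_int B * g (P/2) \<le> (\<Sum>i=0..n. real_of_int (a (Suc i) - a i) * g (real_of_int (b i) * q)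
                  + real_of_int (b (Suc i) - b i) * g (real_of_int (a i) * q))" .
  have "real_of_int B * g (P/2) > 0" using gP Bpos by simp
  then show ?thesis using fin[unfolded Q_def P_def] unfolding P_def by linarith
qed

end
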